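(* Let $\mathcal{CL}=\{\ell_1,\dots,\ell_n,C_1,\dots,C_k\}\subset\mathbb{P}^2_{\mathbb{C}}$ be a conic-line arrangement with $n\geq 3$ and $k\geq 3$ such that $t_{n+k}=0$. Then the Levi graph $H$ of $\mathcal{CL}$ contains an induced cycle of length $6$.
   Context: A conic-line arrangement $\mathcal{CL}=\{\ell_1,\dots,\ell_n,C_1,\dots,C_k\}$ is an arrangement of $n$ lines and $k$ smooth conics in $\mathbb{P}^2_{\mathbb{C}}$ having only ordinary singularities, i.e. every intersection point looks locally like $\{x^a=y^a\}$ for some integer $a\geq 2$. For $r\geq 2$, $t_r$ denotes the number of points of $\mathrm{Sing}(\mathcal{CL})$ lying on exactly $r$ curves of $\mathcal{CL}$; thus $t_{n+k}=0$ means no point lies on all curves. The Levi graph $H$ is the bipartite graph with one vertex for each point $p\in\mathrm{Sing}(\mathcal{CL})$, one vertex for each line and each conic, and an edge between the vertex of $p$ and the vertex of a curve iff $p$ lies on that curve. *)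

theory Defs
  imports "HOL-Analysis.Analysis"
begin

text \<open>Points of the complex projective plane are represented by nonzero vectors of
  complex^3 (homogeneous coordinates); the projective point of p is the class pt p.
  A line is given by a nonzero coefficient vector a (equation a0 x + a1 y + a2 z = 0);
  a conic by a symmetric 3x3 matrix Q (equation p^T Q p = 0), smooth iff det Q is nonzero.
  Curves of the arrangement are indexed by Inl i (line i, i < n) and Inr j (conic j, j < k).\<close>

definition pt :: "complex^3 \<Rightarrow> (complex^3) set" where
  "pt p = {c *s p | c. c \<noteq> 0}"

definition proportional :: "complex^3 \<Rightarrow> complex^3 \<Rightarrow> bool" where
  "proportional u w \<longleftrightarrow> (\<exists>c. c \<noteq> 0 \<and> u = c *s w)"

definition curves :: "nat \<Rightarrow> nat \<Rightarrow> (nat + nat) set" where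
  "curves n k = Inl ` {..<n} \<union> Inr ` {..<k}"

definition on_curve :: "(nat \<Rightarrow> complex^3) \<Rightarrow> (nat \<Rightarrow> complex^3^3) \<Rightarrow> nat + nat \<Rightarrow> complex^3 \<Rightarrow> bool" where
  "on_curve L C c p = (case c of
      Inl i \<Rightarrow> (\<Sum>j\<in>UNIV. L i $ j * p $ j) = 0
    | Inr i \<Rightarrow> (\<Sum>j\<in>UNIV. p $ j * (C i *v p) $ j) = 0)"

definition tangent :: "(nat \<Rightarrow> complex^3) \<Rightarrow> (nat \<Rightarrow> complex^3^3) \<Rightarrow> nat + nat \<Rightarrow> complex^3 \<Rightarrow> complex^3" where
  "tangent L C c p = (case c of Inl i \<Rightarrow> L i | Inr i \<Rightarrow> C i *v p)"

text \<open>Conic-line arrangement: distinct lines, distinct smooth conics, and only ordinary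
  singularities, i.e. (all curves being smooth) any two curves through a common point
  meet transversally there (pairwise distinct tangent lines).\<close>
definition conic_line_arrangement :: "nat \<Rightarrow> nat \<Rightarrow> (nat \<Rightarrow> complex^3) \<Rightarrow> (nat \<Rightarrow> complex^3^3) \<Rightarrow> bool" where
  "conic_line_arrangement n k L C \<longleftrightarrow>
     (\<forall>i<n. L i \<noteq> 0) \<and>
     (\<forall>i<n. \<forall>i'<n. i \<noteq> i' \<longrightarrow> \<not> proportional (L i) (L i')) \<and>
     (\<forall>j<k. transpose (C j) = C j \<and> det (C j) \<noteq> 0) \<and>
     (\<forall>j<k. \<forall>j'<k. j \<noteq> j' \<longrightarrow> (\<nexists>c. c \<noteq> 0 \<and> C j = (\<chi> a b. c * C j' $ a $ b))) \<and>
     (\<forall>p. p \<noteq> 0 \<longrightarrow> (\<forall>c\<in>curves n k. \<forall>c'\<in>curves n k.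
        c \<noteq> c' \<and> on_curve L C c p \<and> on_curve L C c' p \<longrightarrow>
        \<not> proportional (tangent L C c p) (tangent L C c' p)))"

definition mult_at :: "nat \<Rightarrow> nat \<Rightarrow> (nat \<Rightarrow> complex^3) \<Rightarrow> (nat \<Rightarrow> complex^3^3) \<Rightarrow> complex^3 \<Rightarrow> nat" where
  "mult_at n k L C p = card {c \<in> curves n k. on_curve L C c p}"

definition sing_points :: "nat \<Rightarrow> nat \<Rightarrow> (nat \<Rightarrow> complex^3) \<Rightarrow> (nat \<Rightarrow> complex^3^3) \<Rightarrow> (complex^3) set set" where
  "sing_points n k L C = pt ` {p. p \<noteq> 0 \<and> 2 \<le> mult_at n k L C p}"

definition t_num :: "nat \<Rightarrow> nat \<Rightarrow> (nat \<Rightarrow> complex^3) \<Rightarrow> (nat \<Rightarrow> complex^3^3) \<Rightarrow> nat \<Rightarrow> nat" where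
  "t_num n k L C r = card (pt ` {p. p \<noteq> 0 \<and> 2 \<le> mult_at n k L C p \<and> mult_at n k L C p = r})"

definition levi_vertices :: "nat \<Rightarrow> nat \<Rightarrow> (nat \<Rightarrow> complex^3) \<Rightarrow> (nat \<Rightarrow> complex^3^3) \<Rightarrow> ((complex^3) set + (nat + nat)) set" where
  "levi_vertices n k L C = Inl ` sing_points n k L C \<union> Inr ` curves n k"

definition levi_adj :: "(nat \<Rightarrow> complex^3) \<Rightarrow> (nat \<Rightarrow> complex^3^3) \<Rightarrow> (complex^3) set + (nat + nat) \<Rightarrow> (complex^3) set + (nat + nat) \<Rightarrow> bool" where
  "levi_adj L C x y \<longleftrightarrow> (\<exists>P c. ((x = Inl P \<and> y = Inr c) \<or> (x = Inr c \<and> y = Inl P)) \<and>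
       (\<exists>p\<in>P. on_curve L C c p))"

definition induced_cycle :: "'v set \<Rightarrow> ('v \<Rightarrow> 'v \<Rightarrow> bool) \<Rightarrow> 'v list \<Rightarrow> bool" where
  "induced_cycle V E vs \<longleftrightarrow> 3 \<le> length vs \<and> distinct vs \<and> set vs \<subseteq> V \<and>
     (\<forall>i<length vs. \<forall>j<length vs.
        E (vs ! i) (vs ! j) \<longleftrightarrow> (j = Suc i mod length vs \<or> i = Suc j mod length vs))"

end

theory Submission
  imports Defs
begin


definition lin :: "complex^3 \<Rightarrow> complex^3 \<Rightarrow> complex" where
  "lin a p = (\<Sum>j\<in>UNIV. a $ j * p $ j)"
definition qf :: "complex^3^3 \<Rightarrow> complex^3 \<Rightarrow> complex" where
  "qf Q p = (\<Sum>j\<in>UNIV. p $ j * (Q *v p) $ j)"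
definition cr :: "complex^3 \<Rightarrow> complex^3 \<Rightarrow> complex^3" where
  "cr a b = vector [a$2*b$3 - a$3*b$2, a$3*b$1 - a$1*b$3, a$1*b$2 - a$2*b$1]"

lemma lin3: "lin a p = a$1*p$1 + a$2*p$2 + a$3*p$3"
  by (simp add: lin_def sum_3)

lemma K1: assumes "cr a b = 0" "a \<noteq> 0" shows "\<exists>c. b = c *s a"
proof -
  have e: "a$2*b$3 = a$3*b$2" "a$3*b$1 = a$1*b$3" "a$1*b$2 = a$2*b$1"
    using assms(1) unfolding cr_def vec_eq_iff forall_3 by auto
  have "a$1 \<noteq> 0 \<or> a$2 \<noteq> 0 \<or> a$3 \<noteq> 0" using assms(2) unfolding vec_eq_iff forall_3 by auto
  then show ?thesis
  proof (elim disjE)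
    assume h: "a$1 \<noteq> 0"
    show ?thesis apply (rule exI[of _ "b$1/a$1"]) using h e
      unfolding vec_eq_iff forall_3 by (auto simp: field_simps)
  next
    assume h: "a$2 \<noteq> 0"
    show ?thesis apply (rule exI[of _ "b$2/a$2"]) using h e
      unfolding vec_eq_iff forall_3 by (auto simp: field_simps)
  next
    assume h: "a$3 \<noteq> 0"
    show ?thesis apply (rule exI[of _ "b$3/a$3"]) using h e
      unfolding vec_eq_iff forall_3 by (auto simp: field_simps)
  qed
qed

lemma K2: "cr (cr a b) p = lin a p *s b - lin b p *s a"
  unfolding cr_def lin3 vec_eq_iff forall_3 by (simp add: algebra_simps)

lemma K4: "lin a (cr a b) = 0" "lin b (cr a b) = 0"
  unfolding cr_def lin3 by (simp_all add: algebra_simps)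

lemma K3: assumes "a \<noteq> 0" "b \<noteq> 0" "\<not> proportional b a" shows "cr a b \<noteq> 0"
proof
  assume "cr a b = 0"
  then obtain c where "b = c *s a" using K1 assms by blast
  with assms show False unfolding proportional_def by (cases "c = 0") auto
qed

lemma K5: assumes "a \<noteq> 0" "b \<noteq> 0" "\<not> proportional b a" "lin a p = 0" "lin b p = 0"
  shows "\<exists>c. p = c *s cr a b"
  using K1[of "cr a b" p] K2[of a b p] K3[OF assms(1-3)] assms(4,5) by simp

lemma lin_scale: "lin a (c *s p) = c * lin a p"
  unfolding lin3 by (simp add: algebra_simps)

lemma qf_scale: "qf Q (c *s p) = c^2 * qf Q p"
  unfolding qf_def sum_3 matrix_vector_mult_def by (simp add: algebra_simps power2_eq_square)

lemma qf_expand: "qf Q (s *s u + t *s v) = s^2 * qf Q u + s*t*(qf Q (u+v) - qf Q u - qf Q v) + t^2 * qf Q v"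
  unfolding qf_def sum_3 matrix_vector_mult_def by (simp add: algebra_simps power2_eq_square)

lemma quad_root: "\<exists>s t. (s,t) \<noteq> (0::complex,0::complex) \<and> s^2 * A + s*t*B + t^2*D = 0"
proof (cases "A = 0")
  case True then show ?thesis by (intro exI[of _ 1] exI[of _ 0]) simp
next
  case False
  define s where "s = (-B + csqrt (B^2 - 4*A*D))/(2*A)"
  have "s^2 * A + s*B + D = 0"
  proof -
    have "(2*A* s + B)^2 = B^2 - 4*A*D" using False by (simp add: s_def field_simps)
    then have "4*A*(s^2 * A + s*B + D) = 0" by (simp add: algebra_simps power2_eq_square)
    then show ?thesis using False by simp
  qed
  then show ?thesis by (intro exI[of _ s] exI[of _ 1]) simp
qed

lemma lin_comb: "lin a (s *s u + t *s v) = s * lin a u + t * lin a v"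
  unfolding lin3 by (simp add: algebra_simps)

lemma G: assumes "\<And>s t. s *s u + t *s v = 0 \<Longrightarrow> s = 0 \<and> t = 0" "lin a u = 0" "lin a v = 0"
  shows "\<exists>p. p \<noteq> 0 \<and> lin a p = 0 \<and> qf Q p = 0"
proof -
  obtain s t where st: "(s,t) \<noteq> (0,0)" "s^2 * qf Q u + s*t*(qf Q (u+v) - qf Q u - qf Q v) + t^2 * qf Q v = 0"
    using quad_root by blast
  show ?thesis
    apply (rule exI[of _ "s *s u + t *s v"])
    using st assms by (auto simp: qf_expand lin_comb algebra_simps)
qed

lemma K6: assumes "a \<noteq> 0" shows "\<exists>p. p \<noteq> 0 \<and> lin a p = 0 \<and> qf Q p = 0"
proof -
  have "a$1 \<noteq> 0 \<or> a$2 \<noteq> 0 \<or> a$3 \<noteq> 0" using assms unfolding vec_eq_iff forall_3 by auto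
  then show ?thesis
  proof (elim disjE)
    assume h: "a$1 \<noteq> 0"
    show ?thesis apply (rule G[of "vector [-a$2,a$1,0]" "vector [-a$3,0,a$1]"])
      using h unfolding vec_eq_iff forall_3 lin3 by (auto simp: algebra_simps)
  next
    assume h: "a$2 \<noteq> 0"
    show ?thesis apply (rule G[of "vector [a$2,-a$1,0]" "vector [0,-a$3,a$2]"])
      using h unfolding vec_eq_iff forall_3 lin3 by (auto simp: algebra_simps)
  next
    assume h: "a$3 \<noteq> 0"
    show ?thesis apply (rule G[of "vector [a$3,0,-a$1]" "vector [0,a$3,-a$2]"])
      using h unfolding vec_eq_iff forall_3 lin3 by (auto simp: algebra_simps)
  qed
qed



lemma oc_Inl: "on_curve L C (Inl i) p \<longleftrightarrow> lin (L i) p = 0"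
  by (simp add: on_curve_def lin_def)
lemma oc_Inr: "on_curve L C (Inr j) p \<longleftrightarrow> qf (C j) p = 0"
  by (simp add: on_curve_def qf_def)

lemma oc_scale: "x \<noteq> 0 \<Longrightarrow> on_curve L C c (x *s p) \<longleftrightarrow> on_curve L C c p"
  by (cases c) (simp_all add: oc_Inl oc_Inr lin_scale qf_scale)

lemma adj_pt1: "levi_adj L C (Inl (pt p)) (Inr c) \<longleftrightarrow> on_curve L C c p"
  unfolding levi_adj_def pt_def using oc_scale by fastforce
lemma adj_pt2: "levi_adj L C (Inr c) (Inl (pt p)) \<longleftrightarrow> on_curve L C c p"
  unfolding levi_adj_def pt_def using oc_scale by fastforce
lemma adj_ll: "\<not> levi_adj L C (Inl P) (Inl Q)" and adj_rr: "\<not> levi_adj L C (Inr c) (Inr d)"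
  unfolding levi_adj_def by auto

lemma pt_neq: "on_curve L C c p \<Longrightarrow> \<not> on_curve L C c q \<Longrightarrow> pt p \<noteq> pt q"
  by (metis adj_pt1)

lemma finite_curves: "finite (curves n k)" by (simp add: curves_def)
lemma card_curves: "card (curves n k) = n + k"
  unfolding curves_def by (subst card_Un_disjoint) (auto simp: card_image)

lemma vert_pt: assumes "p \<noteq> 0" "c \<in> curves n k" "c' \<in> curves n k" "c \<noteq> c'"
  "on_curve L C c p" "on_curve L C c' p"
  shows "Inl (pt p) \<in> levi_vertices n k L C"
proof -
  have "card {c, c'} \<le> mult_at n k L C p" unfolding mult_at_def
    by (rule card_mono) (use assms finite_curves in auto)
  then have "2 \<le> mult_at n k L C p" using assms(4) by simp
  then show ?thesis using assms(1) unfolding levi_vertices_def sing_points_def by blast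
qed

lemma vert_c: "c \<in> curves n k \<Longrightarrow> Inr c \<in> levi_vertices n k L C"
  unfolding levi_vertices_def by blast

lemma CYC:
  assumes c: "ca \<in> curves n k" "cb \<in> curves n k" "cc \<in> curves n k" "ca \<noteq> cb" "cb \<noteq> cc" "ca \<noteq> cc"
  and p: "pab \<noteq> 0" "pbc \<noteq> 0" "pac \<noteq> 0"
  and o12: "on_curve L C ca pab" "on_curve L C cb pab" "\<not> on_curve L C cc pab"
  and o23: "on_curve L C cb pbc" "on_curve L C cc pbc" "\<not> on_curve L C ca pbc"
  and o13: "on_curve L C ca pac" "on_curve L C cc pac" "\<not> on_curve L C cb pac"
  shows "\<exists>vs. length vs = 6 \<and> induced_cycle (levi_vertices n k L C) (levi_adj L C) vs"
proof -
  define vs where "vs = [Inr ca, Inl (pt pab), Inr cb, Inl (pt pbc), Inr cc, Inl (pt pac)]"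
  have ne: "pt pab \<noteq> pt pbc" "pt pab \<noteq> pt pac" "pt pbc \<noteq> pt pac"
    using pt_neq o12 o23 o13 by metis+
  have d: "distinct vs" unfolding vs_def using ne c by auto
  have s: "set vs \<subseteq> levi_vertices n k L C" unfolding vs_def
    using vert_c[OF c(1)] vert_c[OF c(2)] vert_c[OF c(3)]
      vert_pt[OF p(1) c(1) c(2) c(4) o12(1,2)]
      vert_pt[OF p(2) c(2) c(3) c(5) o23(1,2)]
      vert_pt[OF p(3) c(1) c(3) c(6) o13(1,2)] by auto
  have e: "levi_adj L C (vs ! i) (vs ! j) \<longleftrightarrow> (j = Suc i mod length vs \<or> i = Suc j mod length vs)"
    if "i < 6" "j < 6" for i j
  proof -
    have i: "i = 0 \<or> i = 1 \<or> i = 2 \<or> i = 3 \<or> i = 4 \<or> i = 5" using that by auto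
    have j: "j = 0 \<or> j = 1 \<or> j = 2 \<or> j = 3 \<or> j = 4 \<or> j = 5" using that by auto
    from i j show ?thesis unfolding vs_def
      by (elim disjE) (simp_all add: adj_pt1 adj_pt2 adj_ll adj_rr o12 o23 o13)
  qed
  show ?thesis
    apply (rule exI[of _ vs])
    unfolding induced_cycle_def using d s e by (simp add: vs_def)
qed



lemma pt_scale: "c \<noteq> 0 \<Longrightarrow> pt (c *s q) = pt q"
  unfolding pt_def
proof (intro set_eqI iffI)
  fix x assume "c \<noteq> 0" "x \<in> {d *s (c *s q) |d. d \<noteq> 0}"
  then obtain d where "d \<noteq> 0" "x = d *s (c *s q)" by auto
  then show "x \<in> {d *s q |d. d \<noteq> 0}" using \<open>c \<noteq> 0\<close>
    by (auto simp: vector_smult_assoc intro!: exI[of _ "d * c"])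
next
  fix x assume c: "c \<noteq> 0" and "x \<in> {d *s q |d. d \<noteq> 0}"
  then obtain d where "d \<noteq> 0" "x = d *s q" by auto
  then show "x \<in> {d *s (c *s q) |d. d \<noteq> 0}" using c
    by (auto simp: vector_smult_assoc intro!: exI[of _ "d / c"])
qed

lemma TRI: assumes "a \<noteq> 0" "b \<noteq> 0" "d \<noteq> 0"
  "\<not> proportional b a" "\<not> proportional d a" "\<not> proportional d b"
  "\<not> proportional a b" "\<not> proportional a d" "\<not> proportional b d"
  "lin d (cr a b) \<noteq> 0"
  shows "cr a b \<noteq> 0" "cr b d \<noteq> 0" "cr a d \<noteq> 0" "lin a (cr b d) \<noteq> 0" "lin b (cr a d) \<noteq> 0"
proof -
  have nz: "cr a b \<noteq> 0" "cr b d \<noteq> 0" "cr a d \<noteq> 0"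
    using K3[OF assms(1,2,4)] K3[OF assms(2,3,6)] K3[OF assms(1,3,5)] by auto
  then show "cr a b \<noteq> 0" "cr b d \<noteq> 0" "cr a d \<noteq> 0" by auto
  show "lin a (cr b d) \<noteq> 0"
  proof
    assume h: "lin a (cr b d) = 0"
    then obtain c where c: "cr b d = c *s cr a b" using K5[OF assms(1,2,4) h] K4 by blast
    have "lin d (cr b d) = 0" using K4 by blast
    then have "c * lin d (cr a b) = 0" by (simp add: c lin_scale)
    moreover have "c \<noteq> 0" using c nz by auto
    ultimately show False using assms by simp
  qed
  show "lin b (cr a d) \<noteq> 0"
  proof
    assume h: "lin b (cr a d) = 0"
    then obtain c where c: "cr a d = c *s cr a b" using K5[OF assms(1,2,4) _ h] K4 by blast
    have "lin d (cr a d) = 0" using K4 by blast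
    then have "c * lin d (cr a b) = 0" by (simp add: c lin_scale)
    moreover have "c \<noteq> 0" using c nz by auto
    ultimately show False using assms by simp
  qed
qed



theorem theorem5p5:
  fixes n k :: nat and L :: "nat \<Rightarrow> complex^3" and C :: "nat \<Rightarrow> complex^3^3"
  assumes "conic_line_arrangement n k L C"
    and "n \<ge> 3" and "k \<ge> 3"
    and "t_num n k L C (n + k) = 0"
  shows "\<exists>vs. length vs = 6 \<and> induced_cycle (levi_vertices n k L C) (levi_adj L C) vs"
proof -
  have Lnz0: "\<forall>i<n. L i \<noteq> 0" using assms(1) unfolding conic_line_arrangement_def
    by (rule conjunct1)
  have Lnp0: "\<forall>i<n. \<forall>i'<n. i \<noteq> i' \<longrightarrow> \<not> proportional (L i) (L i')"
    using assms(1) unfolding conic_line_arrangement_def by (rule conjunct1[OF conjunct2])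
  have Lnz: "\<And>i. i < n \<Longrightarrow> L i \<noteq> 0" using Lnz0 by blast
  have Lnp: "\<And>i i'. i < n \<Longrightarrow> i' < n \<Longrightarrow> i \<noteq> i' \<Longrightarrow> \<not> proportional (L i) (L i')"
    using Lnp0 by blast
  have cl: "\<And>i. i < n \<Longrightarrow> Inl i \<in> curves n k" "\<And>j. j < k \<Longrightarrow> Inr j \<in> curves n k"
    unfolding curves_def by auto
  define Oo where "Oo = cr (L 0) (L 1)"
  have n01: "0 < n" "1 < n" "2 < n" using assms(2) by auto
  have L0: "L 0 \<noteq> 0" by (rule Lnz) (use n01 in auto)
  have L1: "L 1 \<noteq> 0" by (rule Lnz) (use n01 in auto)
  have np10: "\<not> proportional (L 1) (L 0)" by (rule Lnp) (use n01 in auto)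
  note K5' = K5[OF L0 L1 np10]
  have Onz: "Oo \<noteq> 0" unfolding Oo_def by (rule K3[OF L0 L1 np10])
  have O01: "lin (L 0) Oo = 0" "lin (L 1) Oo = 0" unfolding Oo_def using K4 by auto
  have ex: "\<exists>c\<in>curves n k. \<not> on_curve L C c Oo"
  proof (rule ccontr)
    assume "\<not> ?thesis"
    then have all: "\<forall>c\<in>curves n k. on_curve L C c Oo" by blast
    define S where "S = {p. p \<noteq> 0 \<and> 2 \<le> mult_at n k L C p \<and> mult_at n k L C p = n + k}"
    have "{c \<in> curves n k. on_curve L C c Oo} = curves n k" using all by auto
    then have mO: "mult_at n k L C Oo = n + k" unfolding mult_at_def using card_curves by simp
    have "Oo \<in> S" unfolding S_def using mO Onz assms(2,3) by auto
    moreover have "pt ` S \<subseteq> {pt Oo}"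
    proof
      fix x assume "x \<in> pt ` S"
      then obtain p where p: "p \<in> S" "x = pt p" by auto
      have sub: "{c \<in> curves n k. on_curve L C c p} \<subseteq> curves n k" by auto
      have "card {c \<in> curves n k. on_curve L C c p} = card (curves n k)"
        using p(1) card_curves unfolding S_def mult_at_def by auto
      then have eq: "{c \<in> curves n k. on_curve L C c p} = curves n k"
        using card_subset_eq[OF finite_curves sub] by blast
      have "on_curve L C (Inl 0) p" "on_curve L C (Inl 1) p"
        using eq cl(1)[of 0] cl(1)[of 1] n01 by blast+
      then have "lin (L 0) p = 0" "lin (L 1) p = 0" by (auto simp: oc_Inl)
      then obtain c where c: "p = c *s Oo" unfolding Oo_def using K5' by blast
      have "c \<noteq> 0" using c p(1) unfolding S_def by auto
      then show "x \<in> {pt Oo}" using p c pt_scale by auto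
    qed
    ultimately have "pt ` S = {pt Oo}" by blast
    then have "t_num n k L C (n + k) = 1" unfolding t_num_def S_def by simp
    then show False using assms(4) by simp
  qed
  then obtain c where c: "c \<in> curves n k" "\<not> on_curve L C c Oo" by blast
  show ?thesis
  proof (cases c)
    case (Inl i)
    have li: "lin (L i) Oo \<noteq> 0" using c Inl by (simp add: oc_Inl)
    have i0: "i < n" using c Inl unfolding curves_def by auto
    have i1: "i \<noteq> 0" using li O01(1) by metis
    have i2: "i \<noteq> 1" using li O01(2) by metis
    note i = i0 i1 i2
    have h: "lin (L i) (cr (L 0) (L 1)) \<noteq> 0" using c Inl by (simp add: oc_Inl Oo_def)
    have np: "\<not> proportional (L 1) (L 0)" "\<not> proportional (L i) (L 0)" "\<not> proportional (L i) (L 1)"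
      "\<not> proportional (L 0) (L 1)" "\<not> proportional (L 0) (L i)" "\<not> proportional (L 1) (L i)"
      using Lnp i n01 by auto
    note T = TRI[OF Lnz[OF n01(1)] Lnz[OF n01(2)] Lnz[OF i(1)] np h]
    have K: "lin (L 1) (cr (L 1) (L i)) = 0" "lin (L i) (cr (L 1) (L i)) = 0"
      "lin (L 0) (cr (L 0) (L i)) = 0" "lin (L i) (cr (L 0) (L i)) = 0"
      "lin (L 0) (cr (L 0) (L 1)) = 0" "lin (L 1) (cr (L 0) (L 1)) = 0" using K4 by auto
    show ?thesis
      apply (rule CYC[where ca = "Inl 0" and cb = "Inl 1" and cc = "Inl i"
            and pab = "cr (L 0) (L 1)" and pbc = "cr (L 1) (L i)" and pac = "cr (L 0) (L i)"])
      using T i n01 cl[of 0] cl[of 1] cl[of i] K h by (simp_all add: oc_Inl)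
  next
    case (Inr j)
    then have j: "j < k" using c unfolding curves_def by auto
    have h: "qf (C j) Oo \<noteq> 0" using c Inr by (simp add: oc_Inr)
    obtain p where p: "p \<noteq> 0" "lin (L 0) p = 0" "qf (C j) p = 0" using K6 L0 L1 by blast
    obtain q where q: "q \<noteq> 0" "lin (L 1) q = 0" "qf (C j) q = 0" using K6 L0 L1 by blast
    have pb: "lin (L 1) p \<noteq> 0"
    proof
      assume "lin (L 1) p = 0"
      then obtain x where x: "p = x *s Oo" unfolding Oo_def using K5' p by blast
      then have "x \<noteq> 0" using p by auto
      then show False using p(3) h by (simp add: x qf_scale)
    qed
    have qa: "lin (L 0) q \<noteq> 0"
    proof
      assume "lin (L 0) q = 0"
      then obtain x where x: "q = x *s Oo" unfolding Oo_def using K5' q by blast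
      then have "x \<noteq> 0" using q by auto
      then show False using q(3) h by (simp add: x qf_scale)
    qed
    show ?thesis
      apply (rule CYC[where ca = "Inl 0" and cb = "Inl 1" and cc = "Inr j"
            and pab = Oo and pbc = q and pac = p])
      using j n01 cl(1)[of 0] cl(1)[of 1] cl(2)[of j] Onz O01 h p q pb qa by (simp_all add: oc_Inl oc_Inr)
  qed
qed

end
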